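(* Let $P$ be an $n\times n$ D-orthogonal matrix. Then there exist vectors $\mathbf u_1,\dots,\mathbf u_n\in\{0,1\}^n$ such that each matrix $I+\mathbf u_i\mathbf u_i^T$ is D-orthogonal, and a matrix obtained from $P$ by permuting its rows and columns is congruent modulo $2$ to the product $(I+\mathbf u_1\mathbf u_1^T)(I+\mathbf u_2\mathbf u_2^T)\cdots(I+\mathbf u_n\mathbf u_n^T)$.
   Context: For integer matrices, $A\cong B$ means $A\equiv B\pmod 2$ entrywise. An integer (dyadic) square matrix $P$ is D-orthogonal if $P^TP\cong I$. Two matrices are indistinguishable if one is obtained from the other by permuting rows and columns. *)

theory Defs
  imports "HOL-Combinatorics.Permutations"
begin

text \<open>n x n integer matrices are represented as functions nat => nat => int,
  only entries with indices < n are meaningful.\<close>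

type_synonym imat = "nat \<Rightarrow> nat \<Rightarrow> int"
type_synonym ivec = "nat \<Rightarrow> int"

definition mat_mult :: "nat \<Rightarrow> imat \<Rightarrow> imat \<Rightarrow> imat" where
  "mat_mult n A B = (\<lambda>i j. \<Sum>k<n. A i k * B k j)"

definition mat_transpose :: "imat \<Rightarrow> imat" where
  "mat_transpose A = (\<lambda>i j. A j i)"

definition mat_id :: imat where
  "mat_id = (\<lambda>i j. if i = j then 1 else 0)"

definition mat_add :: "imat \<Rightarrow> imat \<Rightarrow> imat" where
  "mat_add A B = (\<lambda>i j. A i j + B i j)"

definition outer :: "ivec \<Rightarrow> imat" where
  "outer u = (\<lambda>i j. u i * u j)"

definition cong2 :: "nat \<Rightarrow> imat \<Rightarrow> imat \<Rightarrow> bool" where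
  "cong2 n A B \<longleftrightarrow> (\<forall>i<n. \<forall>j<n. A i j mod 2 = B i j mod 2)"

definition D_orthogonal :: "nat \<Rightarrow> imat \<Rightarrow> bool" where
  "D_orthogonal n P \<longleftrightarrow> cong2 n (mat_mult n (mat_transpose P) P) mat_id"

definition mat_prod_list :: "nat \<Rightarrow> imat list \<Rightarrow> imat" where
  "mat_prod_list n As = foldr (mat_mult n) As mat_id"

definition permute_rc :: "(nat \<Rightarrow> nat) \<Rightarrow> (nat \<Rightarrow> nat) \<Rightarrow> imat \<Rightarrow> imat" where
  "permute_rc \<sigma> \<tau> A = (\<lambda>i j. A (\<sigma> i) (\<tau> j))"

end

theory Submission
  imports Defs "HOL-Library.Z2"
begin

declare add_bit_eq_xor[simp del] mult_bit_eq_and[simp del]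

type_synonym bmat = "nat \<Rightarrow> nat \<Rightarrow> bit"

definition bmm :: "nat \<Rightarrow> bmat \<Rightarrow> bmat \<Rightarrow> bmat" where
  "bmm n A B = (\<lambda>i j. \<Sum>k<n. A i k * B k j)"
definition bI :: bmat where "bI = (\<lambda>i j. if i = j then 1 else 0)"
definition bT :: "(nat \<Rightarrow> bit) \<Rightarrow> bmat" where "bT u = (\<lambda>i j. bI i j + u i * u j)"
definition eqn :: "nat \<Rightarrow> bmat \<Rightarrow> bmat \<Rightarrow> bool" where
  "eqn n A B \<longleftrightarrow> (\<forall>i<n. \<forall>j<n. A i j = B i j)"
definition btr :: "bmat \<Rightarrow> bmat" where "btr A = (\<lambda>i j. A j i)"
definition orthb :: "nat \<Rightarrow> bmat \<Rightarrow> bool" where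
  "orthb n P \<longleftrightarrow> eqn n (bmm n (btr P) P) bI"
definition dot :: "nat \<Rightarrow> (nat \<Rightarrow> bit) \<Rightarrow> (nat \<Rightarrow> bit) \<Rightarrow> bit" where
  "dot n u v = (\<Sum>i<n. u i * v i)"
definition blockid :: "nat \<Rightarrow> nat \<Rightarrow> bmat \<Rightarrow> bool" where
  "blockid n m P \<longleftrightarrow> (\<forall>i<n. \<forall>j<n. (m \<le> i \<or> m \<le> j) \<longrightarrow> P i j = bI i j)"
definition bprod :: "nat \<Rightarrow> bmat list \<Rightarrow> bmat" where
  "bprod n As = foldr (bmm n) As bI"

lemma bit_cases: "(x::bit) = 0 \<or> x = 1"
  using bit_not_zero_iff by blast

lemma bit_add_self[simp]: "(x::bit) + x = 0"
  using bit_cases[of x] by (auto simp flip: one_add_one)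

lemma bit_mult_self[simp]: "(x::bit) * x = x"
  using bit_cases[of x] by auto

lemma sum_delta_left: "i < n \<Longrightarrow> (\<Sum>l<n. bI i l * f l) = (f i :: bit)"
proof -
  assume "i < n"
  have "(\<Sum>l<n. bI i l * f l) = (\<Sum>l<n. if i = l then f l else 0)"
    by (rule sum.cong) (auto simp: bI_def)
  then show ?thesis using \<open>i < n\<close> by simp
qed

lemma sum_delta_right: "j < n \<Longrightarrow> (\<Sum>l<n. f l * bI l j) = (f j :: bit)"
proof -
  assume "j < n"
  have "(\<Sum>l<n. f l * bI l j) = (\<Sum>l<n. if l = j then f l else 0)"
    by (rule sum.cong) (auto simp: bI_def)
  then show ?thesis using \<open>j < n\<close> by simp
qed

lemma bmm_T_left: "i < n \<Longrightarrow> bmm n (bT u) A i j = A i j + u i * dot n u (\<lambda>l. A l j)"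
  by (simp add: bmm_def bT_def dot_def distrib_right sum.distrib sum_distrib_left
      sum_delta_left mult.assoc)

lemma bmm_I_left: "i < n \<Longrightarrow> bmm n bI A i j = A i j"
  by (simp add: bmm_def sum_delta_left)

lemma bmm_I_right: "j < n \<Longrightarrow> bmm n A bI i j = A i j"
  by (simp add: bmm_def sum_delta_right)

lemma bmm_assoc: "bmm n (bmm n A B) C = bmm n A (bmm n B C)"
  unfolding bmm_def
  by (auto simp: fun_eq_iff sum_distrib_left sum_distrib_right mult.assoc intro: sum.swap)

lemma btr_bmm: "btr (bmm n A B) = bmm n (btr B) (btr A)"
  by (simp add: btr_def bmm_def fun_eq_iff mult.commute)

lemma eqn_bmm_cong: "eqn n A A' \<Longrightarrow> eqn n B B' \<Longrightarrow> eqn n (bmm n A B) (bmm n A' B')"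
  by (simp add: eqn_def bmm_def)

lemma eqn_trans: "eqn n A B \<Longrightarrow> eqn n B C \<Longrightarrow> eqn n A C"
  by (simp add: eqn_def)
lemma eqn_sym: "eqn n A B \<Longrightarrow> eqn n B A"
  by (simp add: eqn_def)
lemma eqn_refl: "eqn n A A"
  by (simp add: eqn_def)

lemma btr_bT: "btr (bT u) = bT u"
  by (simp add: btr_def bT_def bI_def fun_eq_iff mult.commute)

lemma dot_col_bT: "j < n \<Longrightarrow> dot n u (\<lambda>l. bT u l j) = u j + dot n u u * u j"
proof -
  assume j: "j < n"
  have "dot n u (\<lambda>l. bT u l j) = (\<Sum>l<n. u l * bI l j) + (\<Sum>l<n. (u l * u l) * u j)"
    by (simp add: dot_def bT_def distrib_left sum.distrib mult.assoc del: bit_mult_self)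
  also have "\<dots> = u j + dot n u u * u j"
    using j by (simp add: sum_delta_right dot_def sum_distrib_right del: bit_mult_self)
  finally show ?thesis .
qed

lemma bT_sq: "dot n u u = 0 \<Longrightarrow> eqn n (bmm n (bT u) (bT u)) bI"
  unfolding eqn_def
  apply (intro allI impI)
  apply (simp add: bmm_T_left dot_col_bT)
  apply (simp add: bT_def add.assoc)
  done

lemma orthb_bT: "dot n u u = 0 \<Longrightarrow> orthb n (bT u)"
  by (simp add: orthb_def btr_bT bT_sq)

lemma orthbD: "orthb n P \<Longrightarrow> i < n \<Longrightarrow> j < n \<Longrightarrow> (\<Sum>l<n. P l i * P l j) = bI i j"
  by (simp add: orthb_def eqn_def bmm_def btr_def)

lemma bT_invol: "dot n u u = 0 \<Longrightarrow> eqn n (bmm n (bT u) (bmm n (bT u) B)) B"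
proof -
  assume "dot n u u = 0"
  then have "eqn n (bmm n (bmm n (bT u) (bT u)) B) (bmm n bI B)"
    by (intro eqn_bmm_cong bT_sq eqn_refl)
  moreover have "eqn n (bmm n bI B) B" by (simp add: eqn_def bmm_I_left)
  ultimately show ?thesis by (metis bmm_assoc eqn_trans)
qed

lemma reduce:
  assumes "orthb n Q" "blockid n (Suc m) Q" "\<forall>i<n. Q i m = bI i m" "m < n"
  shows "blockid n m Q"
  unfolding blockid_def
proof (intro allI impI)
  fix i j assume ij: "i < n" "j < n" "m \<le> i \<or> m \<le> j"
  show "Q i j = bI i j"
  proof (cases "Suc m \<le> i \<or> Suc m \<le> j")
    case True then show ?thesis using assms(2) ij by (auto simp: blockid_def)
  next
    case False
    then have "i = m \<or> j = m" using ij by auto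
    then show ?thesis
    proof
      assume "j = m" then show ?thesis using assms(3) ij by auto
    next
      assume im: "i = m"
      show ?thesis
      proof (cases "j = m")
        case True then show ?thesis using assms(3) ij im by auto
      next
        case jm: False
        have "(\<Sum>l<n. Q l j * Q l m) = bI j m" using orthbD[OF assms(1)] ij assms(4) by auto
        also have "\<dots> = 0" using jm by (simp add: bI_def)
        finally have "0 = (\<Sum>l<n. Q l j * bI l m)" using assms(3) by simp
        also have "\<dots> = Q m j" using assms(4) by (simp add: sum_delta_right)
        finally show ?thesis using im jm by (simp add: bI_def)
      qed
    qed
  qed
qed

lemma find_zero:
  assumes "orthb n P" "blockid n (Suc m) P" "m < n" "\<not> (\<forall>i<n. P i m = bI i m)"
  shows "\<exists>k\<le>m. P k m = 0"
proof (rule ccontr)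
  assume "\<not> ?thesis"
  then have one: "\<forall>k\<le>m. P k m = 1" using bit_cases by blast
  have col: "P i m = (if i \<le> m then 1 else 0)" if "i < n" for i
    using one assms(2) that by (auto simp: blockid_def bI_def)
  show False
  proof (cases "m = 0")
    case True
    then have "\<forall>i<n. P i m = bI i m" using col by (auto simp: bI_def)
    then show False using assms(4) by blast
  next
    case False
    have "(\<Sum>l<n. P l 0 * P l m) = bI 0 m" using orthbD[OF assms(1)] assms(3) by auto
    also have "\<dots> = 0" using False by (simp add: bI_def)
    finally have A: "(\<Sum>l<n. P l 0 * P l m) = 0" .
    have "(\<Sum>l<n. P l 0 * P l m) = (\<Sum>l<n. P l 0 * P l 0)"
    proof (rule sum.cong)
      fix l assume "l \<in> {..<n}"
      then have l: "l < n" by simp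
      show "P l 0 * P l m = P l 0 * P l 0"
      proof (cases "l \<le> m")
        case True then show ?thesis using col l by simp
      next
        case F: False
        then have "P l 0 = bI l 0" using assms(2) l assms(3) by (auto simp: blockid_def)
        then show ?thesis using F by (simp add: bI_def)
      qed
    qed simp
    also have "\<dots> = bI 0 0" using orthbD[OF assms(1), of 0 0] assms(3) by (simp del: bit_mult_self)
    finally show False using A by (simp add: bI_def)
  qed
qed

lemma key_step:
  assumes orth: "orthb n P" and blk: "blockid n (Suc m) P" and mn: "m < n"
  shows "\<exists>\<rho> u Q. \<rho> permutes {..<Suc m} \<and> dot n u u = 0 \<and> orthb n Q \<and> blockid n m Q
     \<and> (\<forall>i<n. \<forall>j<n. P (\<rho> i) j = bmm n (bT u) Q i j)"
proof (cases "\<forall>i<n. P i m = bI i m")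
  case True
  have "bT (\<lambda>_. 0) = bI" by (simp add: bT_def fun_eq_iff)
  then show ?thesis using True
    by (intro exI[of _ id] exI[of _ "\<lambda>_. 0"] exI[of _ P])
       (simp add: dot_def orth reduce[OF orth blk _ mn] bmm_I_left)
next
  case False
  obtain k where k: "k \<le> m" "P k m = 0" using find_zero[OF orth blk mn False] by blast
  define \<rho> where "\<rho> = Transposition.transpose k m"
  have Pi: "\<rho> permutes {..<Suc m}" unfolding \<rho>_def using k by (intro permutes_swap_id) auto
  have Pin: "\<rho> permutes {..<n}" using permutes_subset[OF Pi] mn by auto
  define P1 where "P1 = (\<lambda>i j. P (\<rho> i) j)"
  define p where "p = (\<lambda>l. P1 l m)"
  define u where "u = (\<lambda>l. p l + bI l m)"
  define Q where "Q = bmm n (bT u) P1"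
  have orth1: "orthb n P1"
    unfolding orthb_def eqn_def
  proof (intro allI impI)
    fix i j assume "i < n" "j < n"
    have "bmm n (btr P1) P1 i j = (\<Sum>l<n. (\<lambda>l. P l i * P l j) (\<rho> l))"
      by (simp add: bmm_def btr_def P1_def)
    also have "\<dots> = (\<Sum>l<n. P l i * P l j)"
      using sum.permute[OF Pin, of "\<lambda>l. P l i * P l j"] by (simp add: comp_def)
    also have "\<dots> = bI i j" using orthbD[OF orth] \<open>i < n\<close> \<open>j < n\<close> by simp
    finally show "bmm n (btr P1) P1 i j = bI i j" .
  qed
  have blk1: "blockid n (Suc m) P1"
    unfolding blockid_def
  proof (intro allI impI)
    fix i j assume ij: "i < n" "j < n" "Suc m \<le> i \<or> Suc m \<le> j"
    show "P1 i j = bI i j"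
    proof (cases "Suc m \<le> i")
      case True
      then have "\<rho> i = i" using permutes_not_in[OF Pi] by auto
      then show ?thesis using blk ij True by (auto simp: blockid_def P1_def)
    next
      case False
      then have j: "Suc m \<le> j" using ij by auto
      have "\<rho> i < n" using permutes_in_image[OF Pin] ij by auto
      then have "P1 i j = bI (\<rho> i) j" using blk ij j by (auto simp: blockid_def P1_def)
      also have "\<rho> i \<noteq> j" using permutes_in_image[OF Pi, of i] False j by auto
      then have "bI (\<rho> i) j = 0" by (simp add: bI_def)
      finally show ?thesis using False j by (simp add: bI_def)
    qed
  qed
  have pm: "p m = 0" using k by (simp add: p_def P1_def \<rho>_def)
  have dpp: "dot n p p = 1"
    using orthbD[OF orth1, of m m] mn by (simp add: dot_def p_def bI_def del: bit_mult_self)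
  have dup: "dot n u p = 1"
  proof -
    have "dot n u p = dot n p p + (\<Sum>l<n. p l * bI l m)"
      by (simp add: dot_def u_def distrib_right distrib_left sum.distrib mult.commute del: bit_mult_self)
    also have "\<dots> = 1" using dpp pm mn by (simp add: sum_delta_right)
    finally show ?thesis .
  qed
  have duu: "dot n u u = 0"
  proof -
    have "dot n u u = dot n u p + (\<Sum>l<n. u l * bI l m)"
      by (simp add: dot_def u_def[of] distrib_left sum.distrib del: bit_mult_self)
    also have "\<dots> = 1 + u m" using dup mn by (simp add: sum_delta_right)
    also have "\<dots> = 0" using pm by (simp add: u_def bI_def)
    finally show ?thesis .
  qed
  have Qe: "Q i j = P1 i j + u i * dot n u (\<lambda>l. P1 l j)" if "i < n" for i j
    using that by (simp add: Q_def bmm_T_left)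
  have Qcol: "\<forall>i<n. Q i m = bI i m"
  proof (intro allI impI)
    fix i assume "i < n"
    then have "Q i m = p i + (p i + bI i m)" using Qe dup by (simp add: u_def p_def)
    then show "Q i m = bI i m" by (simp add: add.assoc[symmetric])
  qed
  have ubig: "u i = 0" if "i < n" "Suc m \<le> i" for i
    using blk1 that mn by (auto simp: blockid_def u_def p_def bI_def)
  have blkQ: "blockid n (Suc m) Q"
    unfolding blockid_def
  proof (intro allI impI)
    fix i j assume ij: "i < n" "j < n" "Suc m \<le> i \<or> Suc m \<le> j"
    show "Q i j = bI i j"
    proof (cases "Suc m \<le> i")
      case True
      then show ?thesis using Qe[OF ij(1)] ubig[OF ij(1)] blk1 ij by (auto simp: blockid_def)
    next
      case False
      then have j: "Suc m \<le> j" using ij by auto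
      have "dot n u (\<lambda>l. P1 l j) = (\<Sum>l<n. u l * bI l j)"
        using blk1 ij j by (auto simp: dot_def blockid_def intro!: sum.cong)
      also have "\<dots> = 0" using ij j ubig by (simp add: sum_delta_right)
      finally show ?thesis using Qe[OF ij(1)] blk1 ij by (auto simp: blockid_def)
    qed
  qed
  have orthQ: "orthb n Q"
  proof -
    have "bmm n (btr Q) Q = bmm n (btr P1) (bmm n (bT u) (bmm n (bT u) P1))"
      by (simp add: Q_def btr_bmm btr_bT bmm_assoc)
    moreover have "eqn n (bmm n (btr P1) (bmm n (bT u) (bmm n (bT u) P1))) (bmm n (btr P1) P1)"
      by (intro eqn_bmm_cong eqn_refl bT_invol duu)
    ultimately show ?thesis using orth1 unfolding orthb_def by (metis eqn_trans)
  qed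
  have rel: "\<forall>i<n. \<forall>j<n. P (\<rho> i) j = bmm n (bT u) Q i j"
    using bT_invol[OF duu, of P1] by (auto simp: eqn_def Q_def P1_def)
  show ?thesis
    using Pi duu orthQ reduce[OF orthQ blkQ Qcol mn] rel by blast
qed

lemma main_b:
  assumes "m \<le> n" "orthb n P" "blockid n m P"
  shows "\<exists>w \<sigma> \<tau>. (\<forall>k<m. dot n (w k) (w k) = 0) \<and> \<sigma> permutes {..<m} \<and> \<tau> permutes {..<m}
     \<and> eqn n (\<lambda>i j. P (\<sigma> i) (\<tau> j)) (bprod n (map (\<lambda>k. bT (w k)) [0..<m]))"
  using assms
proof (induction m arbitrary: P)
  case 0
  then show ?case
    by (intro exI[of _ "\<lambda>_ _. 0"] exI[of _ id])
       (auto simp: blockid_def eqn_def bprod_def)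
next
  case (Suc m)
  then have mn: "m < n" by simp
  obtain \<rho> u Q where R: "\<rho> permutes {..<Suc m}" "dot n u u = 0" "orthb n Q" "blockid n m Q"
     "\<forall>i<n. \<forall>j<n. P (\<rho> i) j = bmm n (bT u) Q i j"
    using key_step[OF Suc.prems(2) Suc.prems(3) mn] by blast
  obtain w \<sigma> \<tau> where W: "\<forall>k<m. dot n (w k) (w k) = 0" "\<sigma> permutes {..<m}" "\<tau> permutes {..<m}"
     "eqn n (\<lambda>i j. Q (\<sigma> i) (\<tau> j)) (bprod n (map (\<lambda>k. bT (w k)) [0..<m]))"
    using Suc.IH[OF _ R(3) R(4)] mn by auto
  have sn: "\<sigma> permutes {..<n}" using permutes_subset[OF W(2)] mn by auto
  have tn: "\<tau> permutes {..<n}" using permutes_subset[OF W(3)] mn by auto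
  define w' where "w' = (\<lambda>k. if k = 0 then (\<lambda>i. u (\<sigma> i)) else w (k - 1))"
  define Pr where "Pr = bprod n (map (\<lambda>k. bT (w k)) [0..<m])"
  have map_eq: "map (\<lambda>k. bT (w' k)) [0..<Suc m] = bT (w' 0) # map (\<lambda>k. bT (w k)) [0..<m]"
  proof -
    have "[0..<Suc m] = 0 # map Suc [0..<m]" by (simp add: upt_conv_Cons map_Suc_upt)
    then show ?thesis by (simp add: w'_def comp_def)
  qed
  have d0: "dot n (w' 0) (w' 0) = 0"
    using sum.permute[OF sn, of "\<lambda>i. u i * u i"] R(2) by (simp add: dot_def w'_def comp_def del: bit_mult_self)
  have "\<forall>k<Suc m. dot n (w' k) (w' k) = 0"
    using d0 W(1) by (auto simp: w'_def less_Suc_eq_0_disj)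
  moreover have "(\<rho> \<circ> \<sigma>) permutes {..<Suc m}"
    using permutes_compose[OF permutes_subset[OF W(2)] R(1)] by auto
  moreover have "\<tau> permutes {..<Suc m}" using permutes_subset[OF W(3)] by auto
  moreover have "eqn n (\<lambda>i j. P ((\<rho> \<circ> \<sigma>) i) (\<tau> j)) (bprod n (map (\<lambda>k. bT (w' k)) [0..<Suc m]))"
    unfolding eqn_def
  proof (intro allI impI)
    fix i j assume ij: "i < n" "j < n"
    have si: "\<sigma> i < n" and tj: "\<tau> j < n" using permutes_in_image[OF sn] permutes_in_image[OF tn] ij by auto
    have "P ((\<rho> \<circ> \<sigma>) i) (\<tau> j) = (\<Sum>l<n. bT u (\<sigma> i) l * Q l (\<tau> j))"
      using R(5) si tj by (simp add: bmm_def)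
    also have "\<dots> = (\<Sum>l<n. bT u (\<sigma> i) (\<sigma> l) * Q (\<sigma> l) (\<tau> j))"
      using sum.permute[OF sn, of "\<lambda>l. bT u (\<sigma> i) l * Q l (\<tau> j)"] by (simp add: comp_def)
    also have "\<dots> = (\<Sum>l<n. bT (w' 0) i l * Pr l j)"
    proof (rule sum.cong)
      fix l assume "l \<in> {..<n}"
      then have "Q (\<sigma> l) (\<tau> j) = Pr l j" using W(4) ij by (auto simp: eqn_def Pr_def)
      moreover have "bI (\<sigma> i) (\<sigma> l) = bI i l"
        using permutes_inj[OF sn] by (auto simp: bI_def inj_eq)
      ultimately show "bT u (\<sigma> i) (\<sigma> l) * Q (\<sigma> l) (\<tau> j) = bT (w' 0) i l * Pr l j"
        by (simp add: bT_def w'_def)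
    qed simp
    also have "\<dots> = bprod n (map (\<lambda>k. bT (w' k)) [0..<Suc m]) i j"
      unfolding map_eq by (simp add: bprod_def Pr_def bmm_def)
    finally show "P ((\<rho> \<circ> \<sigma>) i) (\<tau> j) = bprod n (map (\<lambda>k. bT (w' k)) [0..<Suc m]) i j" .
  qed
  ultimately show ?case by blast
qed

definition ofm :: "imat \<Rightarrow> bmat" where "ofm A = (\<lambda>i j. of_int (A i j))"

lemma of_int_bit_mod: "(of_int x :: bit) = of_int (x mod 2)"
proof -
  have "x = x mod 2 + 2 * (x div 2)" by simp
  then have "(of_int x :: bit) = of_int (x mod 2) + 2 * of_int (x div 2)"
    by (metis of_int_add of_int_mult of_int_numeral)
  then show ?thesis by simp
qed

lemma of_int_eq_mod2: "((of_int x :: bit) = of_int y) \<longleftrightarrow> x mod 2 = y mod 2"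
proof -
  have a: "x mod 2 = 0 \<or> x mod 2 = 1" and b: "y mod 2 = 0 \<or> y mod 2 = 1" by auto
  show ?thesis
    apply (subst (1 2) of_int_bit_mod)
    using a b by auto
qed

lemma cong2_iff: "cong2 n A B \<longleftrightarrow> eqn n (ofm A) (ofm B)"
  by (simp add: cong2_def eqn_def ofm_def of_int_eq_mod2)

lemma ofm_mult: "ofm (mat_mult n A B) = bmm n (ofm A) (ofm B)"
  by (simp add: ofm_def mat_mult_def bmm_def fun_eq_iff)

lemma ofm_id: "ofm mat_id = bI"
  by (simp add: ofm_def mat_id_def bI_def fun_eq_iff)

lemma ofm_tr: "ofm (mat_transpose A) = btr (ofm A)"
  by (simp add: ofm_def mat_transpose_def btr_def fun_eq_iff)

lemma D_orth_iff: "D_orthogonal n P \<longleftrightarrow> orthb n (ofm P)"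
  by (simp add: D_orthogonal_def orthb_def cong2_iff ofm_mult ofm_tr ofm_id)

lemma ofm_prod: "ofm (mat_prod_list n As) = bprod n (map ofm As)"
  by (induction As) (simp_all add: mat_prod_list_def bprod_def ofm_id ofm_mult)

lemma ofm_T: "ofm (mat_add mat_id (outer u)) = bT (\<lambda>i. of_int (u i))"
  by (simp add: ofm_def mat_add_def mat_id_def outer_def bT_def bI_def fun_eq_iff)

theorem theorem3p9:
  fixes n :: nat and P :: imat
  assumes "D_orthogonal n P"
  shows "\<exists>u :: nat \<Rightarrow> ivec. \<exists>\<sigma> \<tau>.
           (\<forall>k<n. (\<forall>i<n. u k i \<in> {0, 1})
                  \<and> D_orthogonal n (mat_add mat_id (outer (u k))))
         \<and> \<sigma> permutes {..<n} \<and> \<tau> permutes {..<n}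
         \<and> cong2 n (permute_rc \<sigma> \<tau> P)
             (mat_prod_list n (map (\<lambda>k. mat_add mat_id (outer (u k))) [0..<n]))"
proof -
  have "orthb n (ofm P)" using assms by (simp add: D_orth_iff)
  moreover have "blockid n n (ofm P)" by (simp add: blockid_def)
  ultimately obtain w \<sigma> \<tau> where W: "\<forall>k<n. dot n (w k) (w k) = 0" "\<sigma> permutes {..<n}" "\<tau> permutes {..<n}"
     "eqn n (\<lambda>i j. ofm P (\<sigma> i) (\<tau> j)) (bprod n (map (\<lambda>k. bT (w k)) [0..<n]))"
    using main_b[of n n "ofm P"] by auto
  define u :: "nat \<Rightarrow> ivec" where "u = (\<lambda>k i. if w k i = 1 then 1 else 0)"
  have ou: "(\<lambda>i. of_int (u k i)) = w k" for k
    using bit_cases by (auto simp: u_def fun_eq_iff)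
  have T: "ofm (mat_add mat_id (outer (u k))) = bT (w k)" for k
    by (simp add: ofm_T ou)
  have "\<forall>k<n. (\<forall>i<n. u k i \<in> {0, 1}) \<and> D_orthogonal n (mat_add mat_id (outer (u k)))"
  proof -
    have "u k i \<in> {0, 1}" for k i by (simp add: u_def)
    then show ?thesis using W(1) by (auto simp: D_orth_iff T orthb_bT)
  qed
  moreover have "cong2 n (permute_rc \<sigma> \<tau> P)
             (mat_prod_list n (map (\<lambda>k. mat_add mat_id (outer (u k))) [0..<n]))"
  proof -
    have "map ofm (map (\<lambda>k. mat_add mat_id (outer (u k))) [0..<n]) = map (\<lambda>k. bT (w k)) [0..<n]"
      by (simp add: T comp_def)
    moreover have "ofm (permute_rc \<sigma> \<tau> P) = (\<lambda>i j. ofm P (\<sigma> i) (\<tau> j))"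
      by (simp add: ofm_def permute_rc_def)
    ultimately show ?thesis unfolding cong2_iff ofm_prod using W(4) by metis
  qed
  ultimately show ?thesis using W(2,3) by blast
qed

end
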